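(* Let $M$ be a graded $R$-module. The following are equivalent: (1) For all $Q,P\in qp.Spec_g(M)$, if $qp\text{-}V_M^g(Q)=qp\text{-}V_M^g(P)$ then $Q=P$. (2) $|qp.Spec_g^p(M)|\le 1$ for every $p\in Spec_g(R)$. (3) The natural map $\varphi$ is injective.
   Context: $R=\bigoplus_{g\in G}R_g$ is a graded commutative ring with identity graded by a group $G$, $h(R)=\bigcup_g R_g$; $M$ is a graded $R$-module, $h(M)$ its homogeneous elements. $Gr(I)$ is the graded radical of a graded ideal $I$ (elements all of whose homogeneous components have a power in $I$). $Spec_g(R)$: graded prime ideals. $(K:_RM)=\{r: rM\subseteq K\}$. Graded prime submodule: proper graded $P$ with $rm\in P$ ($r\in h(R), m\in h(M)$) implying $m\in P$ or $r\in(P:_RM)$. $Gr_M(K)$: intersection of graded prime submodules containing $K$ ($M$ if none). Graded primeful property of $K$: for each graded prime $p\supseteq(K:_RM)$ there is a graded prime submodule $P\supseteq K$ with $(P:_RM)=p$. Graded quasi-primary submodule: proper graded $Q$ with $rm\in Q$ ($r\in h(R),m\in h(M)$) implying $r\in Gr((Q:_RM))$ or $m\in Gr_M(Q)$. $qp.Spec_g(M)$: graded quasi-primary submodules with the graded primeful property; $qp.Spec_g^p(M)=\{Q\in qp.Spec_g(M): Gr((Q:_RM))=p\}$. $qp\text{-}V_M^g(K)=\{Q\in qp.Spec_g(M): Gr((Q:_RM))\supseteq Gr((K:_RM))\}$. $\overline R=R/\mathrm{Ann}(M)$ and $\overline I=I/\mathrm{Ann}(M)$ for ideals $I\supseteq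 \mathrm{Ann}(M)$. For $Q\in qp.Spec_g(M)$, $(Gr_M(Q):_RM)=Gr((Q:_RM))$ is a graded prime ideal of $R$ containing $\mathrm{Ann}(M)$; the natural map $\varphi:qp.Spec_g(M)\to Spec_g(\overline R)$ is $\varphi(Q)=\overline{(Gr_M(Q):_RM)}$. *)

theory Defs
  imports Complex_Main
begin

definition is_decomp :: "('g \<Rightarrow> 'a::ab_group_add set) \<Rightarrow> 'a \<Rightarrow> ('g \<Rightarrow> 'a) \<Rightarrow> bool" where
  "is_decomp D x c \<longleftrightarrow> finite {g. c g \<noteq> 0} \<and> (\<forall>g. c g \<in> D g) \<and> x = (\<Sum>g\<in>{g. c g \<noteq> 0}. c g)"

definition direct_sum_grading :: "('g \<Rightarrow> 'a::ab_group_add set) \<Rightarrow> bool" where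
  "direct_sum_grading D \<longleftrightarrow>
     (\<forall>g. 0 \<in> D g \<and> (\<forall>x\<in>D g. \<forall>y\<in>D g. x - y \<in> D g)) \<and>
     (\<forall>x. \<exists>!c. is_decomp D x c)"

definition hcomp :: "('g \<Rightarrow> 'a::ab_group_add set) \<Rightarrow> 'a \<Rightarrow> 'g \<Rightarrow> 'a" where
  "hcomp D x = (THE c. is_decomp D x c)"

definition homog :: "('g \<Rightarrow> 'a set) \<Rightarrow> 'a set" where
  "homog D = (\<Union>g. D g)"

definition graded_ring :: "('g::group_add \<Rightarrow> 'r::comm_ring_1 set) \<Rightarrow> bool" where
  "graded_ring RG \<longleftrightarrow> direct_sum_grading RG \<and>
     (\<forall>g h. \<forall>a\<in>RG g. \<forall>b\<in>RG h. a * b \<in> RG (g + h))"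

definition graded_module :: "('g::group_add \<Rightarrow> 'r::comm_ring_1 set) \<Rightarrow> ('r \<Rightarrow> 'm::ab_group_add \<Rightarrow> 'm) \<Rightarrow> ('g \<Rightarrow> 'm set) \<Rightarrow> bool" where
  "graded_module RG scale MG \<longleftrightarrow> graded_ring RG \<and> module scale \<and> direct_sum_grading MG \<and>
     (\<forall>g h. \<forall>a\<in>RG g. \<forall>m\<in>MG h. scale a m \<in> MG (g + h))"

definition is_ideal :: "'r::comm_ring_1 set \<Rightarrow> bool" where
  "is_ideal I \<longleftrightarrow> 0 \<in> I \<and> (\<forall>x\<in>I. \<forall>y\<in>I. x + y \<in> I) \<and> (\<forall>r. \<forall>x\<in>I. r * x \<in> I)"

definition graded_ideal :: "('g \<Rightarrow> 'r::comm_ring_1 set) \<Rightarrow> 'r set \<Rightarrow> bool" where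
  "graded_ideal RG I \<longleftrightarrow> is_ideal I \<and> (\<forall>x\<in>I. \<forall>g. hcomp RG x g \<in> I)"

definition Gr :: "('g \<Rightarrow> 'r::comm_ring_1 set) \<Rightarrow> 'r set \<Rightarrow> 'r set" where
  "Gr RG I = {r. \<forall>g. \<exists>n. (hcomp RG r g) ^ n \<in> I}"

definition Spec_g :: "('g \<Rightarrow> 'r::comm_ring_1 set) \<Rightarrow> 'r set set" where
  "Spec_g RG = {p. graded_ideal RG p \<and> p \<noteq> UNIV \<and>
     (\<forall>a\<in>homog RG. \<forall>b\<in>homog RG. a * b \<in> p \<longrightarrow> a \<in> p \<or> b \<in> p)}"

definition colon :: "('r \<Rightarrow> 'm \<Rightarrow> 'm) \<Rightarrow> 'm set \<Rightarrow> 'r set" where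
  "colon scale K = {r. \<forall>m. scale r m \<in> K}"

definition Ann :: "('r \<Rightarrow> 'm::zero \<Rightarrow> 'm) \<Rightarrow> 'r set" where
  "Ann scale = colon scale {0}"

definition graded_submodule :: "('r::comm_ring_1 \<Rightarrow> 'm::ab_group_add \<Rightarrow> 'm) \<Rightarrow> ('g \<Rightarrow> 'm set) \<Rightarrow> 'm set \<Rightarrow> bool" where
  "graded_submodule scale MG K \<longleftrightarrow> module.subspace scale K \<and> (\<forall>x\<in>K. \<forall>g. hcomp MG x g \<in> K)"

definition graded_prime_submodule ::
  "('g \<Rightarrow> 'r::comm_ring_1 set) \<Rightarrow> ('r \<Rightarrow> 'm::ab_group_add \<Rightarrow> 'm) \<Rightarrow> ('g \<Rightarrow> 'm set) \<Rightarrow> 'm set \<Rightarrow> bool" where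
  "graded_prime_submodule RG scale MG P \<longleftrightarrow> graded_submodule scale MG P \<and> P \<noteq> UNIV \<and>
     (\<forall>r\<in>homog RG. \<forall>m\<in>homog MG. scale r m \<in> P \<longrightarrow> m \<in> P \<or> r \<in> colon scale P)"

(* Gr_M(K): intersection of graded prime submodules containing K (= M if none) *)
definition GrM :: "('g \<Rightarrow> 'r::comm_ring_1 set) \<Rightarrow> ('r \<Rightarrow> 'm::ab_group_add \<Rightarrow> 'm) \<Rightarrow> ('g \<Rightarrow> 'm set) \<Rightarrow> 'm set \<Rightarrow> 'm set" where
  "GrM RG scale MG K = \<Inter>{P. graded_prime_submodule RG scale MG P \<and> K \<subseteq> P}"

definition graded_primeful ::
  "('g \<Rightarrow> 'r::comm_ring_1 set) \<Rightarrow> ('r \<Rightarrow> 'm::ab_group_add \<Rightarrow> 'm) \<Rightarrow> ('g \<Rightarrow> 'm set) \<Rightarrow> 'm set \<Rightarrow> bool" where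
  "graded_primeful RG scale MG K \<longleftrightarrow>
     (\<forall>p\<in>Spec_g RG. colon scale K \<subseteq> p \<longrightarrow>
        (\<exists>P. graded_prime_submodule RG scale MG P \<and> K \<subseteq> P \<and> colon scale P = p))"

definition graded_quasi_primary ::
  "('g \<Rightarrow> 'r::comm_ring_1 set) \<Rightarrow> ('r \<Rightarrow> 'm::ab_group_add \<Rightarrow> 'm) \<Rightarrow> ('g \<Rightarrow> 'm set) \<Rightarrow> 'm set \<Rightarrow> bool" where
  "graded_quasi_primary RG scale MG Q \<longleftrightarrow> graded_submodule scale MG Q \<and> Q \<noteq> UNIV \<and>
     (\<forall>r\<in>homog RG. \<forall>m\<in>homog MG. scale r m \<in> Q \<longrightarrow>
        r \<in> Gr RG (colon scale Q) \<or> m \<in> GrM RG scale MG Q)"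

definition qpSpec :: "('g \<Rightarrow> 'r::comm_ring_1 set) \<Rightarrow> ('r \<Rightarrow> 'm::ab_group_add \<Rightarrow> 'm) \<Rightarrow> ('g \<Rightarrow> 'm set) \<Rightarrow> 'm set set" where
  "qpSpec RG scale MG = {Q. graded_quasi_primary RG scale MG Q \<and> graded_primeful RG scale MG Q}"

definition qpSpec_at :: "('g \<Rightarrow> 'r::comm_ring_1 set) \<Rightarrow> ('r \<Rightarrow> 'm::ab_group_add \<Rightarrow> 'm) \<Rightarrow> ('g \<Rightarrow> 'm set) \<Rightarrow> 'r set \<Rightarrow> 'm set set" where
  "qpSpec_at RG scale MG p = {Q \<in> qpSpec RG scale MG. Gr RG (colon scale Q) = p}"

definition qpV :: "('g \<Rightarrow> 'r::comm_ring_1 set) \<Rightarrow> ('r \<Rightarrow> 'm::ab_group_add \<Rightarrow> 'm) \<Rightarrow> ('g \<Rightarrow> 'm set) \<Rightarrow> 'm set \<Rightarrow> 'm set set" where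
  "qpV RG scale MG K = {Q \<in> qpSpec RG scale MG. Gr RG (colon scale K) \<subseteq> Gr RG (colon scale Q)}"

(* I/Ann(M), represented as the set of cosets x + Ann(M), x \<in> I, in R/Ann(M) *)
definition quot_Ann :: "('r::comm_ring_1 \<Rightarrow> 'm::ab_group_add \<Rightarrow> 'm) \<Rightarrow> 'r set \<Rightarrow> 'r set set" where
  "quot_Ann scale I = (\<lambda>x. (\<lambda>a. x + a) ` Ann scale) ` I"

definition phi :: "('g \<Rightarrow> 'r::comm_ring_1 set) \<Rightarrow> ('r \<Rightarrow> 'm::ab_group_add \<Rightarrow> 'm) \<Rightarrow> ('g \<Rightarrow> 'm set) \<Rightarrow> 'm set \<Rightarrow> 'r set set" where
  "phi RG scale MG Q = quot_Ann scale (colon scale (GrM RG scale MG Q))"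

end

theory Submission imports Defs begin

section \<open>Decompositions\<close>

lemma dsg_group:
  assumes "direct_sum_grading D"
  shows "0 \<in> D g" "x \<in> D g \<Longrightarrow> y \<in> D g \<Longrightarrow> x - y \<in> D g"
    "x \<in> D g \<Longrightarrow> - x \<in> D g" "x \<in> D g \<Longrightarrow> y \<in> D g \<Longrightarrow> x + y \<in> D g"
proof -
  have h: "\<And>x y. x \<in> D g \<Longrightarrow> y \<in> D g \<Longrightarrow> x - y \<in> D g" "0 \<in> D g"
    using assms unfolding direct_sum_grading_def by auto
  show "0 \<in> D g" by (fact h(2))
  show "x \<in> D g \<Longrightarrow> y \<in> D g \<Longrightarrow> x - y \<in> D g" by (fact h(1))
  show n: "x \<in> D g \<Longrightarrow> - x \<in> D g" using h(1)[of 0 x] h(2) by simp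
  show "x \<in> D g \<Longrightarrow> y \<in> D g \<Longrightarrow> x + y \<in> D g"
    using h(1)[of x "- y"] h(1)[of 0 y] h(2) by simp
qed

lemma hcomp_decomp:
  assumes "direct_sum_grading D"
  shows "is_decomp D x (hcomp D x)"
proof -
  have "\<exists>!c. is_decomp D x c" using assms unfolding direct_sum_grading_def by blast
  then show ?thesis unfolding hcomp_def by (rule theI')
qed

lemma hcomp_unique:
  assumes "direct_sum_grading D" "is_decomp D x c"
  shows "hcomp D x = c"
proof -
  have "\<exists>!c. is_decomp D x c" using assms unfolding direct_sum_grading_def by blast
  then show ?thesis using assms(2) hcomp_decomp[OF assms(1)] by blast
qed

lemma hcomp_in:
  assumes "direct_sum_grading D"
  shows "hcomp D x g \<in> D g"
  using hcomp_decomp[OF assms] unfolding is_decomp_def by blast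

lemma hcomp_finite:
  assumes "direct_sum_grading D"
  shows "finite {g. hcomp D x g \<noteq> 0}"
  using hcomp_decomp[OF assms] unfolding is_decomp_def by blast

lemma hcomp_sum:
  assumes "direct_sum_grading D" "finite F" "{g. hcomp D x g \<noteq> 0} \<subseteq> F"
  shows "x = (\<Sum>g\<in>F. hcomp D x g)"
proof -
  have "x = (\<Sum>g\<in>{g. hcomp D x g \<noteq> 0}. hcomp D x g)"
    using hcomp_decomp[OF assms(1)] unfolding is_decomp_def by blast
  also have "\<dots> = (\<Sum>g\<in>F. hcomp D x g)"
    by (rule sum.mono_neutral_left) (use assms in auto)
  finally show ?thesis .
qed

lemma hcomp_eqI:
  assumes "direct_sum_grading D" "finite F" "\<And>k. c k \<in> D k" "\<And>k. k \<notin> F \<Longrightarrow> c k = 0"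
    "x = (\<Sum>k\<in>F. c k)"
  shows "hcomp D x = c"
proof (rule hcomp_unique[OF assms(1)])
  have sub: "{g. c g \<noteq> 0} \<subseteq> F" using assms(4) by blast
  have "x = (\<Sum>k\<in>{g. c g \<noteq> 0}. c k)"
    unfolding assms(5) by (rule sum.mono_neutral_right) (use assms sub in auto)
  then show "is_decomp D x c" unfolding is_decomp_def
    using assms(3) finite_subset[OF sub assms(2)] by blast
qed

lemma hcomp_homog:
  assumes "direct_sum_grading D" "x \<in> D h"
  shows "hcomp D x = (\<lambda>g. if g = h then x else 0)"
  by (rule hcomp_eqI[OF assms(1), of "{h}"]) (use assms dsg_group[OF assms(1)] in auto)

lemma hcomp_homog_self:
  assumes "direct_sum_grading D" "x \<in> D h"
  shows "hcomp D x h = x"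
  using hcomp_homog[OF assms] by simp

lemma hcomp_add:
  assumes "direct_sum_grading D"
  shows "hcomp D (x + y) = (\<lambda>g. hcomp D x g + hcomp D y g)"
proof (rule hcomp_eqI[OF assms, of "{g. hcomp D x g \<noteq> 0} \<union> {g. hcomp D y g \<noteq> 0}"])
  let ?F = "{g. hcomp D x g \<noteq> 0} \<union> {g. hcomp D y g \<noteq> 0}"
  show "finite ?F" using hcomp_finite[OF assms] by blast
  show "\<And>k. hcomp D x k + hcomp D y k \<in> D k" using hcomp_in[OF assms] dsg_group(4)[OF assms] by blast
  show "\<And>k. k \<notin> ?F \<Longrightarrow> hcomp D x k + hcomp D y k = 0" by auto
  have "x = (\<Sum>g\<in>?F. hcomp D x g)" "y = (\<Sum>g\<in>?F. hcomp D y g)"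
    using hcomp_sum[OF assms] hcomp_finite[OF assms] by blast+
  then show "x + y = (\<Sum>k\<in>?F. hcomp D x k + hcomp D y k)"
    by (simp add: sum.distrib)
qed

lemma hcomp_zero:
  assumes "direct_sum_grading D"
  shows "hcomp D 0 g = 0"
  using hcomp_homog[OF assms dsg_group(1)[OF assms, of g]] by simp

lemma hcomp_morph:
  fixes f :: "'a::ab_group_add \<Rightarrow> 'b::ab_group_add" and h :: "'g::group_add"
  assumes DA: "direct_sum_grading A" and DB: "direct_sum_grading B"
    and add: "\<And>x y. f (x + y) = f x + f y"
    and deg: "\<And>g s. s \<in> A g \<Longrightarrow> f s \<in> B (g + h)"
  shows "hcomp B (f s) k = f (hcomp A s (k - h))"
proof -
  have f0: "f 0 = 0" using add[of 0 0] by simp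
  let ?S = "{g. hcomp A s g \<noteq> 0}"
  let ?F = "(\<lambda>g. g + h) ` ?S"
  have "hcomp B (f s) = (\<lambda>k. f (hcomp A s (k - h)))"
  proof (rule hcomp_eqI[OF DB, of ?F])
    show "finite ?F" using hcomp_finite[OF DA] by blast
    show "\<And>k. f (hcomp A s (k - h)) \<in> B k"
      using deg[OF hcomp_in[OF DA]] by (metis diff_add_cancel)
    show "\<And>k. k \<notin> ?F \<Longrightarrow> f (hcomp A s (k - h)) = 0"
    proof -
      fix k assume "k \<notin> ?F"
      then have "k - h \<notin> ?S" by (metis (no_types, lifting) diff_add_cancel image_eqI)
      then show "f (hcomp A s (k - h)) = 0" using f0 by simp
    qed
    have inj: "inj_on (\<lambda>g. g + h) ?S" by (rule inj_onI) simp
    have "(\<Sum>k\<in>?F. f (hcomp A s (k - h))) = (\<Sum>g\<in>?S. f (hcomp A s g))"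
      by (subst sum.reindex[OF inj]) simp
    also have "\<dots> = f (\<Sum>g\<in>?S. hcomp A s g)"
      using sum_comp_morphism[of f, OF f0 add, of "hcomp A s" ?S] by (simp add: comp_def)
    also have "(\<Sum>g\<in>?S. hcomp A s g) = s"
      using hcomp_decomp[OF DA, of s] unfolding is_decomp_def by simp
    finally show "f s = (\<Sum>k\<in>?F. f (hcomp A s (k - h)))" by simp
  qed
  then show ?thesis by simp
qed

section \<open>Graded rings\<close>

lemma gr_dsg: "graded_ring RG \<Longrightarrow> direct_sum_grading RG"
  unfolding graded_ring_def by blast

lemma gr_mul: "graded_ring RG \<Longrightarrow> a \<in> RG g \<Longrightarrow> b \<in> RG h \<Longrightarrow> a * b \<in> RG (g + h)"
  unfolding graded_ring_def by blast

lemma hcomp_mult_right: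
  assumes "graded_ring RG" "b \<in> RG h"
  shows "hcomp RG (s * b) k = hcomp RG s (k - h) * b"
  by (rule hcomp_morph[OF gr_dsg[OF assms(1)] gr_dsg[OF assms(1)], where f = "\<lambda>s. s * b"])
     (auto simp: distrib_right intro: gr_mul[OF assms(1) _ assms(2)])

lemma one_deg0:
  fixes RG :: "'g::group_add \<Rightarrow> 'r::comm_ring_1 set"
  assumes "graded_ring RG"
  shows "1 \<in> RG 0"
proof -
  note D = gr_dsg[OF assms]
  let ?e = "hcomp RG 1 0"
  have homx: "?e * x = x" if "x \<in> RG h" for x h
  proof -
    have "hcomp RG (1 * x) h = hcomp RG 1 (h - h) * x" by (rule hcomp_mult_right[OF assms that])
    then show ?thesis using hcomp_homog_self[OF D that] by simp
  qed
  have all: "?e * r = r" for r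
  proof -
    let ?S = "{g. hcomp RG r g \<noteq> 0}"
    have r: "r = (\<Sum>g\<in>?S. hcomp RG r g)" by (rule hcomp_sum[OF D hcomp_finite[OF D]]) simp
    have "?e * r = (\<Sum>g\<in>?S. ?e * hcomp RG r g)" by (subst r) (simp add: sum_distrib_left)
    also have "\<dots> = (\<Sum>g\<in>?S. hcomp RG r g)" using homx[OF hcomp_in[OF D]] by simp
    finally show ?thesis using r by simp
  qed
  have "?e = 1" using all[of 1] by simp
  then show ?thesis using hcomp_in[OF D, of 1 0] by simp
qed

lemma homogE: "x \<in> homog D \<Longrightarrow> (\<And>g. x \<in> D g \<Longrightarrow> P) \<Longrightarrow> P"
  unfolding homog_def by auto

lemma homogI: "x \<in> D g \<Longrightarrow> x \<in> homog D"
  unfolding homog_def by auto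

lemma homog_one: "graded_ring RG \<Longrightarrow> 1 \<in> homog RG"
  using one_deg0 unfolding homog_def by blast

lemma homog_mult: "graded_ring RG \<Longrightarrow> a \<in> homog RG \<Longrightarrow> b \<in> homog RG \<Longrightarrow> a * b \<in> homog RG"
proof -
  assume a: "graded_ring RG" "a \<in> homog RG" "b \<in> homog RG"
  then obtain g h where "a \<in> RG g" "b \<in> RG h" unfolding homog_def by blast
  then have "a * b \<in> RG (g + h)" using gr_mul[OF a(1)] by blast
  then show ?thesis unfolding homog_def by blast
qed

lemma homog_power: "graded_ring RG \<Longrightarrow> a \<in> homog RG \<Longrightarrow> a ^ n \<in> homog RG"
  by (induction n) (auto intro: homog_mult homog_one)

lemma ideal_mult: "is_ideal I \<Longrightarrow> x \<in> I \<Longrightarrow> r * x \<in> I"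
  unfolding is_ideal_def by blast

lemma ideal_mult2: "is_ideal I \<Longrightarrow> x \<in> I \<Longrightarrow> x * r \<in> I"
  using ideal_mult[of I x r] by (simp add: mult.commute)

lemma ideal_sum: "is_ideal I \<Longrightarrow> (\<And>i. i \<in> F \<Longrightarrow> f i \<in> I) \<Longrightarrow> sum f F \<in> I"
proof (induction F rule: infinite_finite_induct)
  case (infinite A) then show ?case unfolding is_ideal_def by simp
next
  case empty then show ?case unfolding is_ideal_def by simp
next
  case (insert x F) then show ?case unfolding is_ideal_def by simp
qed

lemma ideal_add: "is_ideal I \<Longrightarrow> x \<in> I \<Longrightarrow> y \<in> I \<Longrightarrow> x + y \<in> I"
  unfolding is_ideal_def by blast

lemma ideal_0: "is_ideal I \<Longrightarrow> 0 \<in> I"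
  unfolding is_ideal_def by blast

lemma ideal_one: "is_ideal I \<Longrightarrow> 1 \<in> I \<Longrightarrow> I = UNIV"
  using ideal_mult[of I 1] by auto

lemma Gr_homog:
  assumes "graded_ring RG" "is_ideal I" "a \<in> homog RG"
  shows "a \<in> Gr RG I \<longleftrightarrow> (\<exists>n. a ^ n \<in> I)"
proof -
  obtain h where h: "a \<in> RG h" using assms(3) unfolding homog_def by blast
  have hc: "hcomp RG a = (\<lambda>g. if g = h then a else 0)" by (rule hcomp_homog[OF gr_dsg[OF assms(1)] h])
  show ?thesis
  proof
    assume "a \<in> Gr RG I"
    then obtain n where "hcomp RG a h ^ n \<in> I" unfolding Gr_def by blast
    then show "\<exists>n. a ^ n \<in> I" using hc by auto
  next
    assume "\<exists>n. a ^ n \<in> I"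
    then obtain n where n: "a ^ n \<in> I" by blast
    have z: "0 ^ 1 \<in> I" using ideal_0[OF assms(2)] by simp
    have "\<exists>n. hcomp RG a g ^ n \<in> I" for g
    proof (cases "g = h")
      case True then show ?thesis using hc n by auto
    next
      case False then show ?thesis using hc z by (intro exI[of _ 1]) simp
    qed
    then show "a \<in> Gr RG I" unfolding Gr_def by blast
  qed
qed

lemma Spec_ideal: "p \<in> Spec_g RG \<Longrightarrow> is_ideal p"
  unfolding Spec_g_def graded_ideal_def by blast

lemma Spec_prime: "p \<in> Spec_g RG \<Longrightarrow> a \<in> homog RG \<Longrightarrow> b \<in> homog RG \<Longrightarrow> a * b \<in> p \<Longrightarrow> a \<in> p \<or> b \<in> p"
  unfolding Spec_g_def by blast

lemma Spec_proper: "p \<in> Spec_g RG \<Longrightarrow> p \<noteq> UNIV"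
  unfolding Spec_g_def by blast

lemma Spec_graded: "p \<in> Spec_g RG \<Longrightarrow> graded_ideal RG p"
  unfolding Spec_g_def by blast

lemma prime_pow:
  assumes "graded_ring RG" "p \<in> Spec_g RG" "a \<in> homog RG" "a ^ n \<in> p"
  shows "a \<in> p"
  using assms(4)
proof (induction n)
  case 0
  then have "1 \<in> p" by simp
  then have "p = UNIV" by (rule ideal_one[OF Spec_ideal[OF assms(2)]])
  then show ?case using Spec_proper[OF assms(2)] by blast
next
  case (Suc n)
  have "a * a ^ n \<in> p" using Suc.prems by simp
  then have "a \<in> p \<or> a ^ n \<in> p"
    by (rule Spec_prime[OF assms(2) assms(3) homog_power[OF assms(1,3)]])
  then show ?case using Suc.IH by blast
qed

lemma homog_hcomp: "direct_sum_grading D \<Longrightarrow> hcomp D x g \<in> homog D"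
  unfolding homog_def by (rule UN_I[OF UNIV_I hcomp_in])

lemma Gr_sub_prime:
  assumes "graded_ring RG" "p \<in> Spec_g RG" "I \<subseteq> p"
  shows "Gr RG I \<subseteq> p"
proof
  fix r assume r: "r \<in> Gr RG I"
  note D = gr_dsg[OF assms(1)]
  have c: "hcomp RG r g \<in> p" for g
  proof -
    obtain n where "hcomp RG r g ^ n \<in> I" using r unfolding Gr_def by blast
    then show ?thesis using prime_pow[OF assms(1,2) homog_hcomp[OF D]] assms(3) by blast
  qed
  have "r = (\<Sum>g\<in>{g. hcomp RG r g \<noteq> 0}. hcomp RG r g)"
    by (rule hcomp_sum[OF D hcomp_finite[OF D]]) simp
  also have "\<dots> \<in> p" by (rule ideal_sum[OF Spec_ideal[OF assms(2)]]) (use c in blast)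
  finally show "r \<in> p" .
qed

section \<open>Krull-type existence of graded primes\<close>

lemma graded_idealD: "graded_ideal RG I \<Longrightarrow> is_ideal I"
  "graded_ideal RG I \<Longrightarrow> x \<in> I \<Longrightarrow> hcomp RG x g \<in> I"
  unfolding graded_ideal_def by blast+

lemma ideal_ext_graded:
  assumes gr: "graded_ring RG" and p: "graded_ideal RG p" and x: "x \<in> RG h"
  shows "graded_ideal RG {z + s * x | z s. z \<in> p}"
proof -
  let ?J = "{z + s * x | z s. z \<in> p}"
  note D = gr_dsg[OF gr]
  note ip = graded_idealD(1)[OF p]
  have "is_ideal ?J" unfolding is_ideal_def
  proof (intro conjI ballI allI)
    show "0 \<in> ?J" using ideal_0[OF ip] by (intro CollectI exI[of _ 0]) simp
  next
    fix a b assume "a \<in> ?J" "b \<in> ?J"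
    then obtain z1 s1 z2 s2 where "a = z1 + s1 * x" "z1 \<in> p" "b = z2 + s2 * x" "z2 \<in> p" by blast
    then have "a + b = (z1 + z2) + (s1 + s2) * x" "z1 + z2 \<in> p"
      using ideal_add[OF ip] by (auto simp: algebra_simps)
    then show "a + b \<in> ?J" by blast
  next
    fix r a assume "a \<in> ?J"
    then obtain z1 s1 where a: "a = z1 + s1 * x" "z1 \<in> p" by blast
    have "r * a = r * z1 + (r * s1) * x" unfolding a(1) by (simp add: algebra_simps)
    moreover have "r * z1 \<in> p" by (rule ideal_mult[OF ip a(2)])
    ultimately show "r * a \<in> ?J" by blast
  qed
  moreover have "hcomp RG a g \<in> ?J" if "a \<in> ?J" for a g
  proof -
    obtain z1 s1 where a: "a = z1 + s1 * x" "z1 \<in> p" using \<open>a \<in> ?J\<close> by blast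
    have "hcomp RG a g = hcomp RG z1 g + hcomp RG s1 (g - h) * x"
      unfolding a(1) hcomp_add[OF D] hcomp_mult_right[OF gr x] by simp
    moreover have "hcomp RG z1 g \<in> p" by (rule graded_idealD(2)[OF p a(2)])
    ultimately show ?thesis by blast
  qed
  ultimately show ?thesis unfolding graded_ideal_def by blast
qed

lemma krull:
  assumes gr: "graded_ring RG" and I: "graded_ideal RG I" and a: "a \<in> homog RG"
    and np: "\<And>n. a ^ n \<notin> I"
  shows "\<exists>p\<in>Spec_g RG. I \<subseteq> p \<and> a \<notin> p"
proof -
  define \<A> where "\<A> = {J. graded_ideal RG J \<and> I \<subseteq> J \<and> (\<forall>n. a ^ n \<notin> J)}"
  have ne: "\<A> \<noteq> {}" using I np unfolding \<A>_def by blast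
  have ch: "\<Union>\<C> \<in> \<A>" if C: "\<C> \<noteq> {}" "subset.chain \<A> \<C>" for \<C>
  proof -
    have CA: "\<C> \<subseteq> \<A>" and tot: "\<And>X Y. X \<in> \<C> \<Longrightarrow> Y \<in> \<C> \<Longrightarrow> X \<subseteq> Y \<or> Y \<subseteq> X"
      using C(2) unfolding subset.chain_def by blast+
    obtain J0 where J0: "J0 \<in> \<C>" using C(1) by blast
    have gi: "graded_ideal RG J" if "J \<in> \<C>" for J using CA that unfolding \<A>_def by blast
    have memA: "I \<subseteq> J \<and> (\<forall>n. a ^ n \<notin> J)" if "J \<in> \<C>" for J
      using CA that unfolding \<A>_def by blast
    have iU: "is_ideal (\<Union>\<C>)" unfolding is_ideal_def
    proof (intro conjI ballI allI)
      show "0 \<in> \<Union>\<C>" using J0 ideal_0[OF graded_idealD(1)[OF gi[OF J0]]] by blast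
    next
      fix x y assume "x \<in> \<Union>\<C>" "y \<in> \<Union>\<C>"
      then obtain X Y where XY: "x \<in> X" "X \<in> \<C>" "y \<in> Y" "Y \<in> \<C>" by blast
      show "x + y \<in> \<Union>\<C>"
      proof (cases "X \<subseteq> Y")
        case True
        then have "x \<in> Y" using XY(1) by blast
        then have "x + y \<in> Y" by (rule ideal_add[OF graded_idealD(1)[OF gi[OF XY(4)]] _ XY(3)])
        then show ?thesis using XY(4) by blast
      next
        case False
        then have "Y \<subseteq> X" using tot[OF XY(2) XY(4)] by blast
        then have "y \<in> X" using XY(3) by blast
        then have "x + y \<in> X" by (rule ideal_add[OF graded_idealD(1)[OF gi[OF XY(2)]] XY(1)])
        then show ?thesis using XY(2) by blast
      qed
    next
      fix r x assume "x \<in> \<Union>\<C>"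
      then obtain X where X: "x \<in> X" "X \<in> \<C>" by blast
      have "r * x \<in> X" by (rule ideal_mult[OF graded_idealD(1)[OF gi[OF X(2)]] X(1)])
      then show "r * x \<in> \<Union>\<C>" using X(2) by blast
    qed
    have hU: "hcomp RG x g \<in> \<Union>\<C>" if "x \<in> \<Union>\<C>" for x g
    proof -
      from that obtain X where X: "x \<in> X" "X \<in> \<C>" by (rule UnionE)
      have "hcomp RG x g \<in> X" by (rule graded_idealD(2)[OF gi[OF X(2)] X(1)])
      then show ?thesis using X(2) by blast
    qed
    have IU: "I \<subseteq> \<Union>\<C>" using memA[OF J0] J0 by blast
    have nU: "a ^ n \<notin> \<Union>\<C>" for n
    proof
      assume "a ^ n \<in> \<Union>\<C>"
      then obtain X where "a ^ n \<in> X" "X \<in> \<C>" by blast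
      then show False using memA by blast
    qed
    have "graded_ideal RG (\<Union>\<C>)" unfolding graded_ideal_def using iU hU by blast
    then show ?thesis unfolding \<A>_def using IU nU by blast
  qed
  obtain p where pA: "p \<in> \<A>" and pmax: "\<And>X. X \<in> \<A> \<Longrightarrow> p \<subseteq> X \<Longrightarrow> X = p"
    using subset_Zorn_nonempty[OF ne ch] by blast
  have pg: "graded_ideal RG p" and Ip: "I \<subseteq> p" and pn: "\<And>n. a ^ n \<notin> p"
    using pA unfolding \<A>_def by blast+
  note ip = graded_idealD(1)[OF pg]
  have ext: "\<exists>n z s. z \<in> p \<and> a ^ n = z + s * x" if x: "x \<in> homog RG" "x \<notin> p" for x
  proof (rule ccontr)
    assume nn: "\<not> ?thesis"
    obtain h where xh: "x \<in> RG h" using x(1) unfolding homog_def by blast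
    let ?J = "{z + s * x | z s. z \<in> p}"
    have "?J \<in> \<A>" unfolding \<A>_def
    proof (intro CollectI conjI allI)
      show "graded_ideal RG ?J" by (rule ideal_ext_graded[OF gr pg xh])
      show "I \<subseteq> ?J"
      proof
        fix y assume "y \<in> I"
        then have "y \<in> p" "y = y + 0 * x" using Ip by auto
        then show "y \<in> ?J" by blast
      qed
      show "a ^ n \<notin> ?J" for n using nn by blast
    qed
    moreover have "p \<subseteq> ?J"
    proof
      fix y assume "y \<in> p"
      moreover have "y = y + 0 * x" by simp
      ultimately show "y \<in> ?J" by blast
    qed
    ultimately have "?J = p" using pmax by blast
    moreover have "x \<in> ?J" using ideal_0[OF ip] by (intro CollectI exI[of _ 0] exI[of _ 1]) simp
    ultimately show False using x(2) by blast
  qed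
  have "p \<in> Spec_g RG" unfolding Spec_g_def
  proof (intro CollectI conjI ballI impI)
    show "graded_ideal RG p" by (fact pg)
    show "p \<noteq> UNIV" using pn[of 0] by blast
  next
    fix x y assume xy: "x \<in> homog RG" "y \<in> homog RG" "x * y \<in> p"
    show "x \<in> p \<or> y \<in> p"
    proof (rule ccontr)
      assume "\<not> (x \<in> p \<or> y \<in> p)"
      then have nx: "x \<notin> p" and ny: "y \<notin> p" by blast+
      obtain i z1 s1 where e1: "z1 \<in> p" "a ^ i = z1 + s1 * x" using ext[OF xy(1) nx] by blast
      obtain j z2 s2 where e2: "z2 \<in> p" "a ^ j = z2 + s2 * y" using ext[OF xy(2) ny] by blast
      have "a ^ (i + j) = z1 * (z2 + s2 * y) + (s1 * x) * z2 + (s1 * s2) * (x * y)"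
        unfolding power_add e1(2) e2(2) by (simp add: algebra_simps)
      also have "\<dots> \<in> p"
        by (intro ideal_add[OF ip] ideal_mult[OF ip] ideal_mult2[OF ip] e1(1) e2(1) xy(3))
      finally show False using pn by blast
    qed
  qed
  moreover have "a \<notin> p" using pn[of 1] by simp
  ultimately show ?thesis using Ip by blast
qed

lemma Gr_eq_Inter:
  assumes gr: "graded_ring RG" and I: "graded_ideal RG I"
  shows "Gr RG I = \<Inter>{p\<in>Spec_g RG. I \<subseteq> p}"
proof
  show "Gr RG I \<subseteq> \<Inter>{p\<in>Spec_g RG. I \<subseteq> p}" using Gr_sub_prime[OF gr] by blast
next
  show "\<Inter>{p\<in>Spec_g RG. I \<subseteq> p} \<subseteq> Gr RG I"
  proof
    fix x assume x: "x \<in> \<Inter>{p\<in>Spec_g RG. I \<subseteq> p}"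
    have "\<exists>n. hcomp RG x g ^ n \<in> I" for g
    proof (rule ccontr)
      assume "\<not> ?thesis"
      then obtain p where p: "p \<in> Spec_g RG" "I \<subseteq> p" "hcomp RG x g \<notin> p"
        using krull[OF gr I homog_hcomp[OF gr_dsg[OF gr]]] by blast
      have "x \<in> p" using x p by blast
      then show False using p(3) graded_idealD(2)[OF Spec_graded[OF p(1)]] by blast
    qed
    then show "x \<in> Gr RG I" unfolding Gr_def by blast
  qed
qed

section \<open>Graded modules\<close>

lemma gm_facts:
  assumes "graded_module RG scale MG"
  shows "graded_ring RG" "module scale" "direct_sum_grading MG"
    "\<And>a m g h. a \<in> RG g \<Longrightarrow> m \<in> MG h \<Longrightarrow> scale a m \<in> MG (g + h)"
  using assms unfolding graded_module_def by blast+

lemma hcomp_scale: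
  assumes gm: "graded_module RG scale MG" and m: "m \<in> MG h"
  shows "hcomp MG (scale s m) k = scale (hcomp RG s (k - h)) m"
  by (rule hcomp_morph[OF gr_dsg[OF gm_facts(1)[OF gm]] gm_facts(3)[OF gm], where f = "\<lambda>s. scale s m"])
     (auto simp: module.scale_left_distrib[OF gm_facts(2)[OF gm]] intro: gm_facts(4)[OF gm _ m])

lemma colon_homog:
  assumes gm: "graded_module RG scale MG" and K: "module.subspace scale K"
    and h: "\<And>m. m \<in> homog MG \<Longrightarrow> scale r m \<in> K"
  shows "r \<in> colon scale K"
  unfolding colon_def
proof (intro CollectI allI)
  fix m
  note D = gm_facts(3)[OF gm] and mo = gm_facts(2)[OF gm]
  let ?S = "{g. hcomp MG m g \<noteq> 0}"
  have "m = (\<Sum>g\<in>?S. hcomp MG m g)" by (rule hcomp_sum[OF D hcomp_finite[OF D]]) simp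
  then have "scale r m = (\<Sum>g\<in>?S. scale r (hcomp MG m g))"
    by (metis module.scale_sum_right[OF mo])
  also have "\<dots> \<in> K"
    by (rule module.subspace_sum[OF mo K]) (rule h[OF homog_hcomp[OF D]])
  finally show "scale r m \<in> K" .
qed

lemma gsub_subspace: "graded_submodule scale MG Q \<Longrightarrow> module.subspace scale Q"
  unfolding graded_submodule_def by blast

lemma gsub_hcomp: "graded_submodule scale MG Q \<Longrightarrow> x \<in> Q \<Longrightarrow> hcomp MG x g \<in> Q"
  unfolding graded_submodule_def by blast

lemma colon_graded:
  assumes gm: "graded_module RG scale MG" and Q: "graded_submodule scale MG Q"
  shows "graded_ideal RG (colon scale Q)"
proof -
  note mo = gm_facts(2)[OF gm] and sQ = gsub_subspace[OF Q]
  have "is_ideal (colon scale Q)" unfolding is_ideal_def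
  proof (intro conjI ballI allI)
    show "0 \<in> colon scale Q" unfolding colon_def
      using module.subspace_0[OF mo sQ] module.scale_zero_left[OF mo] by simp
  next
    fix x y assume "x \<in> colon scale Q" "y \<in> colon scale Q"
    then show "x + y \<in> colon scale Q" unfolding colon_def
      using module.subspace_add[OF mo sQ] module.scale_left_distrib[OF mo] by simp
  next
    fix r x assume "x \<in> colon scale Q"
    then have "scale r (scale x m) \<in> Q" for m unfolding colon_def
      using module.subspace_scale[OF mo sQ] by blast
    then show "r * x \<in> colon scale Q" unfolding colon_def
      by (simp add: module.scale_scale[OF mo])
  qed
  moreover have "hcomp RG x g \<in> colon scale Q" if x: "x \<in> colon scale Q" for x g
  proof (rule colon_homog[OF gm sQ])
    fix m assume "m \<in> homog MG"
    then obtain h where mh: "m \<in> MG h" by (rule homogE)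
    have "scale x m \<in> Q" using x unfolding colon_def by blast
    then have "hcomp MG (scale x m) (g + h) \<in> Q" by (rule gsub_hcomp[OF Q])
    then show "scale (hcomp RG x g) m \<in> Q" unfolding hcomp_scale[OF gm mh] by (simp add: add.assoc)
  qed
  ultimately show ?thesis unfolding graded_ideal_def by blast
qed

lemma colon_prime:
  assumes gm: "graded_module RG scale MG" and P: "graded_prime_submodule RG scale MG P"
  shows "colon scale P \<in> Spec_g RG"
proof -
  note mo = gm_facts(2)[OF gm]
  have Pg: "graded_submodule scale MG P" and PU: "P \<noteq> UNIV"
    and Pp: "\<And>r m. r \<in> homog RG \<Longrightarrow> m \<in> homog MG \<Longrightarrow> scale r m \<in> P \<Longrightarrow> m \<in> P \<or> r \<in> colon scale P"
    using P unfolding graded_prime_submodule_def by blast+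
  show ?thesis unfolding Spec_g_def
  proof (intro CollectI conjI ballI impI)
    show "graded_ideal RG (colon scale P)" by (rule colon_graded[OF gm Pg])
    show "colon scale P \<noteq> UNIV"
    proof
      assume "colon scale P = UNIV"
      then have "scale 1 m \<in> P" for m unfolding colon_def by blast
      then show False using PU module.scale_one[OF mo] by auto
    qed
  next
    fix a b assume ab: "a \<in> homog RG" "b \<in> homog RG" "a * b \<in> colon scale P"
    show "a \<in> colon scale P \<or> b \<in> colon scale P"
    proof (rule disjCI)
      assume "b \<notin> colon scale P"
      then obtain m where m: "m \<in> homog MG" "scale b m \<notin> P"
        using colon_homog[OF gm gsub_subspace[OF Pg]] by blast
      obtain g where "b \<in> RG g" using ab(2) by (rule homogE)
      moreover obtain h where "m \<in> MG h" using m(1) by (rule homogE)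
      ultimately have "scale b m \<in> MG (g + h)" by (rule gm_facts(4)[OF gm])
      then have bm: "scale b m \<in> homog MG" by (rule homogI)
      have "scale a (scale b m) \<in> P" using ab(3) module.scale_scale[OF mo] unfolding colon_def by simp
      then show "a \<in> colon scale P" using Pp[OF ab(1) bm] m(2) by blast
    qed
  qed
qed

lemma GrM_subspace:
  assumes gm: "graded_module RG scale MG"
  shows "module.subspace scale (GrM RG scale MG Q)"
  unfolding GrM_def
  by (rule module.subspace_Inter[OF gm_facts(2)[OF gm]])
     (auto simp: graded_prime_submodule_def dest: gsub_subspace)

lemma colon_Inter: "colon scale (\<Inter>S) = \<Inter>(colon scale ` S)"
  unfolding colon_def by blast

lemma colon_mono: "A \<subseteq> B \<Longrightarrow> colon scale A \<subseteq> colon scale B"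
  unfolding colon_def by blast

lemma colon_GrM:
  assumes gm: "graded_module RG scale MG" and Q: "graded_submodule scale MG Q"
    and pf: "graded_primeful RG scale MG Q"
  shows "colon scale (GrM RG scale MG Q) = Gr RG (colon scale Q)"
proof -
  let ?Ps = "{P. graded_prime_submodule RG scale MG P \<and> Q \<subseteq> P}"
  have "colon scale (GrM RG scale MG Q) = \<Inter>(colon scale ` ?Ps)"
    unfolding GrM_def by (rule colon_Inter)
  also have "\<dots> = \<Inter>{p\<in>Spec_g RG. colon scale Q \<subseteq> p}"
  proof
    show "\<Inter>(colon scale ` ?Ps) \<subseteq> \<Inter>{p\<in>Spec_g RG. colon scale Q \<subseteq> p}"
    proof
      fix x assume x: "x \<in> \<Inter>(colon scale ` ?Ps)"
      show "x \<in> \<Inter>{p\<in>Spec_g RG. colon scale Q \<subseteq> p}"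
      proof
        fix p assume "p \<in> {p\<in>Spec_g RG. colon scale Q \<subseteq> p}"
        then obtain P where "graded_prime_submodule RG scale MG P" "Q \<subseteq> P" "colon scale P = p"
          using pf unfolding graded_primeful_def by blast
        then show "x \<in> p" using x by blast
      qed
    qed
  next
    show "\<Inter>{p\<in>Spec_g RG. colon scale Q \<subseteq> p} \<subseteq> \<Inter>(colon scale ` ?Ps)"
    proof
      fix x assume x: "x \<in> \<Inter>{p\<in>Spec_g RG. colon scale Q \<subseteq> p}"
      show "x \<in> \<Inter>(colon scale ` ?Ps)"
      proof
        fix P assume "P \<in> ?Ps"
        then have P: "graded_prime_submodule RG scale MG P" "Q \<subseteq> P" by blast+
        have "colon scale P \<in> Spec_g RG" by (rule colon_prime[OF gm P(1)])
        moreover have "colon scale Q \<subseteq> colon scale P" by (rule colon_mono[OF P(2)])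
        ultimately show "x \<in> colon scale P" using x by blast
      qed
    qed
  qed
  also have "\<dots> = Gr RG (colon scale Q)"
    by (rule Gr_eq_Inter[OF gm_facts(1)[OF gm] colon_graded[OF gm Q], symmetric])
  finally show ?thesis .
qed



lemma graded_ideal_Inter:
  assumes "\<And>p. p \<in> S \<Longrightarrow> graded_ideal RG p"
  shows "graded_ideal RG (\<Inter>S)"
proof -
  have "is_ideal (\<Inter>S)" unfolding is_ideal_def
  proof (intro conjI ballI allI)
    show "0 \<in> \<Inter>S" using ideal_0[OF graded_idealD(1)[OF assms]] by blast
  next
    fix x y assume "x \<in> \<Inter>S" "y \<in> \<Inter>S"
    then show "x + y \<in> \<Inter>S" using ideal_add[OF graded_idealD(1)[OF assms]] by blast
  next
    fix r x assume "x \<in> \<Inter>S"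
    then show "r * x \<in> \<Inter>S" using ideal_mult[OF graded_idealD(1)[OF assms]] by blast
  qed
  moreover have "hcomp RG x g \<in> \<Inter>S" if "x \<in> \<Inter>S" for x g
    using that graded_idealD(2)[OF assms] by blast
  ultimately show ?thesis unfolding graded_ideal_def by blast
qed

lemma A_prime:
  assumes gm: "graded_module RG scale MG" and Q: "Q \<in> qpSpec RG scale MG"
  shows "Gr RG (colon scale Q) \<in> Spec_g RG"
proof -
  note gr = gm_facts(1)[OF gm] and mo = gm_facts(2)[OF gm]
  have Qg: "graded_submodule scale MG Q" and QU: "Q \<noteq> UNIV"
    and Qqp: "\<And>r m. r \<in> homog RG \<Longrightarrow> m \<in> homog MG \<Longrightarrow> scale r m \<in> Q \<Longrightarrow>
        r \<in> Gr RG (colon scale Q) \<or> m \<in> GrM RG scale MG Q"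
    and pf: "graded_primeful RG scale MG Q"
    using Q unfolding qpSpec_def graded_quasi_primary_def by blast+
  let ?I = "colon scale Q"
  let ?A = "Gr RG ?I"
  have Ig: "graded_ideal RG ?I" by (rule colon_graded[OF gm Qg])
  note iI = graded_idealD(1)[OF Ig]
  have AI: "?A = \<Inter>{p\<in>Spec_g RG. ?I \<subseteq> p}" by (rule Gr_eq_Inter[OF gr Ig])
  have rad: "c \<in> ?A" if c: "c \<in> homog RG" "c ^ n \<in> ?A" for c n
  proof -
    obtain k where "(c ^ n) ^ k \<in> ?I" using c(2) Gr_homog[OF gr iI homog_power[OF gr c(1)]] by blast
    then have "c ^ (n * k) \<in> ?I" by (simp add: power_mult)
    then show ?thesis using Gr_homog[OF gr iI c(1)] by blast
  qed
  show ?thesis unfolding Spec_g_def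
  proof (intro CollectI conjI ballI impI)
    show "graded_ideal RG ?A" unfolding AI
      by (rule graded_ideal_Inter) (blast dest: Spec_graded)
    show "?A \<noteq> UNIV"
    proof
      assume "?A = UNIV"
      then obtain n where "1 ^ n \<in> ?I" using Gr_homog[OF gr iI homog_one[OF gr]] by blast
      then have "scale 1 m \<in> Q" for m unfolding colon_def by simp
      then show False using QU module.scale_one[OF mo] by auto
    qed
  next
    fix a b assume ab: "a \<in> homog RG" "b \<in> homog RG" "a * b \<in> ?A"
    obtain n where n: "(a * b) ^ n \<in> ?I"
      using ab(3) Gr_homog[OF gr iI homog_mult[OF gr ab(1) ab(2)]] by blast
    show "a \<in> ?A \<or> b \<in> ?A"
    proof (cases "\<forall>m\<in>homog MG. scale (b ^ n) m \<in> GrM RG scale MG Q")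
      case True
      then have "b ^ n \<in> colon scale (GrM RG scale MG Q)"
        using colon_homog[OF gm GrM_subspace[OF gm]] by blast
      then have "b ^ n \<in> ?A" unfolding colon_GrM[OF gm Qg pf] .
      then show ?thesis using rad[OF ab(2)] by blast
    next
      case False
      then obtain m where m: "m \<in> homog MG" "scale (b ^ n) m \<notin> GrM RG scale MG Q" by blast
      obtain g where "b ^ n \<in> RG g" using homog_power[OF gr ab(2)] by (rule homogE)
      moreover obtain h where "m \<in> MG h" using m(1) by (rule homogE)
      ultimately have "scale (b ^ n) m \<in> MG (g + h)" by (rule gm_facts(4)[OF gm])
      then have bm: "scale (b ^ n) m \<in> homog MG" by (rule homogI)
      have "scale ((a * b) ^ n) m \<in> Q" using n unfolding colon_def by blast
      then have "scale (a ^ n) (scale (b ^ n) m) \<in> Q"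
        by (simp add: module.scale_scale[OF mo] power_mult_distrib)
      then have "a ^ n \<in> ?A" using Qqp[OF homog_power[OF gr ab(1)] bm] m(2) by blast
      then show ?thesis using rad[OF ab(1)] by blast
    qed
  qed
qed

lemma Union_quot:
  assumes mo: "module scale"
  shows "\<Union>(quot_Ann scale (colon scale K)) = colon scale K"
proof
  show "\<Union>(quot_Ann scale (colon scale K)) \<subseteq> colon scale K"
  proof
    fix y assume "y \<in> \<Union>(quot_Ann scale (colon scale K))"
    then obtain x a where xa: "x \<in> colon scale K" "a \<in> Ann scale" "y = x + a"
      unfolding quot_Ann_def by blast
    have "scale y m = scale x m" for m
      using xa(2) unfolding xa(3) Ann_def colon_def by (simp add: module.scale_left_distrib[OF mo])
    then show "y \<in> colon scale K" using xa(1) unfolding colon_def by simp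
  qed
next
  show "colon scale K \<subseteq> \<Union>(quot_Ann scale (colon scale K))"
  proof
    fix x assume x: "x \<in> colon scale K"
    have "0 \<in> Ann scale" unfolding Ann_def colon_def by (simp add: module.scale_zero_left[OF mo])
    then have "x \<in> (\<lambda>a. x + a) ` Ann scale" by (metis add_0_right image_eqI)
    then show "x \<in> \<Union>(quot_Ann scale (colon scale K))" using x unfolding quot_Ann_def by blast
  qed
qed

lemma subsingleton_card:
  assumes "\<forall>a\<in>S. \<forall>b\<in>S. a = b"
  shows "finite S \<and> card S \<le> 1"
proof (cases "S = {}")
  case True then show ?thesis by simp
next
  case False
  then obtain x where "x \<in> S" by blast
  then have "S = {x}" using assms by blast
  then show ?thesis by simp
qed

theorem theorem3p7:
  fixes RG :: "'g::group_add \<Rightarrow> 'r::comm_ring_1 set"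
    and scale :: "'r \<Rightarrow> 'm::ab_group_add \<Rightarrow> 'm"
    and MG :: "'g \<Rightarrow> 'm set"
  assumes "graded_module RG scale MG"
  shows "((\<forall>Q\<in>qpSpec RG scale MG. \<forall>P\<in>qpSpec RG scale MG.
             qpV RG scale MG Q = qpV RG scale MG P \<longrightarrow> Q = P)
          \<longleftrightarrow> (\<forall>p\<in>Spec_g RG. finite (qpSpec_at RG scale MG p) \<and> card (qpSpec_at RG scale MG p) \<le> 1))
       \<and> ((\<forall>p\<in>Spec_g RG. finite (qpSpec_at RG scale MG p) \<and> card (qpSpec_at RG scale MG p) \<le> 1)
          \<longleftrightarrow> inj_on (phi RG scale MG) (qpSpec RG scale MG))"
proof -
  note gm = assms and mo = gm_facts(2)[OF assms]
  let ?qp = "qpSpec RG scale MG"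
  let ?A = "\<lambda>Q. Gr RG (colon scale Q)"
  define U where "U = (\<forall>Q\<in>?qp. \<forall>P\<in>?qp. ?A Q = ?A P \<longrightarrow> Q = P)"
  have key1: "qpV RG scale MG Q = qpV RG scale MG P \<longleftrightarrow> ?A Q = ?A P" if "Q \<in> ?qp" "P \<in> ?qp" for Q P
  proof
    assume e: "qpV RG scale MG Q = qpV RG scale MG P"
    have "Q \<in> qpV RG scale MG Q" "P \<in> qpV RG scale MG P" using that unfolding qpV_def by blast+
    then have "Q \<in> qpV RG scale MG P" "P \<in> qpV RG scale MG Q" using e by blast+
    then show "?A Q = ?A P" unfolding qpV_def by blast
  next
    assume "?A Q = ?A P"
    then show "qpV RG scale MG Q = qpV RG scale MG P" unfolding qpV_def by simp
  qed
  have cG: "colon scale (GrM RG scale MG Q) = ?A Q" if "Q \<in> ?qp" for Q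
    using that colon_GrM[OF gm] unfolding qpSpec_def graded_quasi_primary_def by blast
  have key2: "phi RG scale MG Q = phi RG scale MG P \<longleftrightarrow> ?A Q = ?A P" if "Q \<in> ?qp" "P \<in> ?qp" for Q P
  proof
    assume e: "phi RG scale MG Q = phi RG scale MG P"
    have "colon scale (GrM RG scale MG Q) = colon scale (GrM RG scale MG P)"
      using arg_cong[OF e, of Union] unfolding phi_def Union_quot[OF mo] .
    then show "?A Q = ?A P" using cG that by simp
  next
    assume "?A Q = ?A P"
    then show "phi RG scale MG Q = phi RG scale MG P" unfolding phi_def using cG that by simp
  qed
  have e1: "(\<forall>Q\<in>?qp. \<forall>P\<in>?qp. qpV RG scale MG Q = qpV RG scale MG P \<longrightarrow> Q = P) \<longleftrightarrow> U"
    unfolding U_def by (rule ball_cong[OF refl], rule ball_cong[OF refl]) (simp add: key1)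
  have e3: "inj_on (phi RG scale MG) ?qp \<longleftrightarrow> U"
    unfolding U_def inj_on_def by (rule ball_cong[OF refl], rule ball_cong[OF refl]) (simp add: key2)
  have e2: "(\<forall>p\<in>Spec_g RG. finite (qpSpec_at RG scale MG p) \<and> card (qpSpec_at RG scale MG p) \<le> 1) \<longleftrightarrow> U"
  proof
    assume H: "\<forall>p\<in>Spec_g RG. finite (qpSpec_at RG scale MG p) \<and> card (qpSpec_at RG scale MG p) \<le> 1"
    show U unfolding U_def
    proof (intro ballI impI)
      fix Q P assume QP: "Q \<in> ?qp" "P \<in> ?qp" "?A Q = ?A P"
      have p: "?A Q \<in> Spec_g RG" by (rule A_prime[OF gm QP(1)])
      have "Q \<in> qpSpec_at RG scale MG (?A Q)" "P \<in> qpSpec_at RG scale MG (?A Q)"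
        using QP unfolding qpSpec_at_def by auto
      moreover have fin: "finite (qpSpec_at RG scale MG (?A Q))" and "card (qpSpec_at RG scale MG (?A Q)) \<le> Suc 0"
        using H p by auto
      ultimately show "Q = P" using card_le_Suc0_iff_eq[OF fin] by blast
    qed
  next
    assume U
    show "\<forall>p\<in>Spec_g RG. finite (qpSpec_at RG scale MG p) \<and> card (qpSpec_at RG scale MG p) \<le> 1"
    proof
      fix p assume "p \<in> Spec_g RG"
      have "\<forall>a\<in>qpSpec_at RG scale MG p. \<forall>b\<in>qpSpec_at RG scale MG p. a = b"
        using \<open>U\<close> unfolding U_def qpSpec_at_def by auto
      then show "finite (qpSpec_at RG scale MG p) \<and> card (qpSpec_at RG scale MG p) \<le> 1"
        by (rule subsingleton_card)
    qed
  qed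
  show ?thesis unfolding e1 e2 e3 by simp
qed


end
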